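(* Let $b_n$ be the number of Dyck paths of semilength $n\ge1$ in which every descent except the last one has odd length, and the last descent has even length. Let $h_0(z)=\sum_{n\ge1}b_nz^{2n}$. Then $$h_0=\frac{z^2}{v_1^2-z^2}=\frac1{z^2}-\frac{v_1}{z}-1,$$ and, with $Z=z^2$, $h_0=Z^2+2Z^3+4Z^4+10Z^5+26Z^6+68Z^7+\cdots$.
   Context: A Dyck path is a finite sequence of up-steps $(1,1)$ and down-steps $(1,-1)$ starting at height $0$, never going below height $0$, and ending at height $0$; its semilength is half its number of steps. Only nonempty paths are considered, so every path has a last descent. A descent is a maximal run of consecutive down-steps; its length is the number of down-steps in it. Let $v_1=v_1(z)$ denote the unique root $u$ of the cubic $$z u^3+(z^2-1)u^2-z^3u+z^2=0$$ which is a Laurent series in $z$ with $z\,v_1(z)\to1$ as $z\to0$. Its expansion begins $v_1=\frac1z-z-z^5-2z^7-\cdots$. *)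

theory Defs
  imports "HOL-Computational_Algebra.Formal_Laurent_Series"
begin

text \<open>Dyck paths as lists of steps: True = up-step (1,1), False = down-step (1,-1).\<close>

definition ups :: "bool list \<Rightarrow> nat" where
  "ups xs = length (filter (\<lambda>s. s) xs)"

definition downs :: "bool list \<Rightarrow> nat" where
  "downs xs = length (filter (\<lambda>s. \<not> s) xs)"

definition dyck_path :: "bool list \<Rightarrow> bool" where
  "dyck_path xs \<longleftrightarrow> (\<forall>i \<le> length xs. downs (take i xs) \<le> ups (take i xs)) \<and> ups xs = downs xs"

text \<open>Lengths of the maximal runs of consecutive down-steps, left to right;
  the first argument is the length of the current run being read.\<close>
fun desc_aux :: "nat \<Rightarrow> bool list \<Rightarrow> nat list" where
  "desc_aux k [] = (if k > 0 then [k] else [])"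
| "desc_aux k (False # xs) = desc_aux (Suc k) xs"
| "desc_aux k (True # xs) = (if k > 0 then k # desc_aux 0 xs else desc_aux 0 xs)"

definition descents :: "bool list \<Rightarrow> nat list" where
  "descents xs = desc_aux 0 xs"

definition b :: "nat \<Rightarrow> nat" where
  "b n = card {xs. length xs = 2 * n \<and> dyck_path xs \<and>
           descents xs \<noteq> [] \<and> (\<forall>d \<in> set (butlast (descents xs)). odd d) \<and>
           even (last (descents xs))}"

definition h0 :: "real fls" where
  "h0 = fps_to_fls (Abs_fps (\<lambda>k. if even k \<and> k \<ge> 2 then real (b (k div 2)) else 0))"

text \<open>v_1: the unique Laurent-series root u of z u^3 + (z^2-1) u^2 - z^3 u + z^2 = 0
  with z u -> 1 as z -> 0 (i.e. z u is a power series with constant term 1).\<close>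
definition v1 :: "real fls" where
  "v1 = (THE u. fls_X * u ^ 3 + (fls_X ^ 2 - 1) * u ^ 2 - fls_X ^ 3 * u + fls_X ^ 2 = 0
              \<and> fls_subdegree (fls_X * u) \<ge> 0 \<and> fls_nth (fls_X * u) 0 = 1)"

end

theory Submission
  imports Defs
begin


fun ok :: "nat \<Rightarrow> bool list \<Rightarrow> bool" where
  "ok h [] = (h = 0)"
| "ok h (True # xs) = ok (Suc h) xs"
| "ok h (False # xs) = (h > 0 \<and> ok (h - 1) xs)"

lemma ups_simps[simp]: "ups [] = 0" "ups (True # xs) = Suc (ups xs)" "ups (False # xs) = ups xs"
  by (simp_all add: ups_def)
lemma downs_simps[simp]: "downs [] = 0" "downs (True # xs) = downs xs" "downs (False # xs) = Suc (downs xs)"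
  by (simp_all add: downs_def)

lemma all_take_Cons:
  "(\<forall>i\<le>length (x#xs). P (take i (x#xs))) \<longleftrightarrow> P [] \<and> (\<forall>i\<le>length xs. P (x # take i xs))"
proof
  assume h: "\<forall>i\<le>length (x#xs). P (take i (x#xs))"
  show "P [] \<and> (\<forall>i\<le>length xs. P (x # take i xs))"
  proof
    show "P []" using h[rule_format, of 0] by simp
    show "\<forall>i\<le>length xs. P (x # take i xs)"
      using h by (metis Suc_le_mono length_Cons take_Suc_Cons)
  qed
next
  assume h: "P [] \<and> (\<forall>i\<le>length xs. P (x # take i xs))"
  show "\<forall>i\<le>length (x#xs). P (take i (x#xs))"
  proof (intro allI impI)
    fix i assume "i \<le> length (x#xs)"
    then show "P (take i (x#xs))" using h by (cases i) auto
  qed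
qed

lemma ok_gen: "ok h xs \<longleftrightarrow> (\<forall>i\<le>length xs. downs (take i xs) \<le> h + ups (take i xs)) \<and> h + ups xs = downs xs"
proof (induction xs arbitrary: h)
  case Nil then show ?case by auto
next
  case (Cons x xs)
  show ?case
  proof (cases x)
    case True
    then show ?thesis using Cons[of "Suc h"] by (simp only: all_take_Cons[where P="\<lambda>ys. downs ys \<le> h + ups ys"]) simp
  next
    case False
    then show ?thesis using Cons[of "h - 1"]
      apply (simp only: all_take_Cons[where P="\<lambda>ys. downs ys \<le> h + ups ys"])
      apply simp
      apply (cases h)
       apply auto
      done
  qed
qed

lemma dyck_ok: "dyck_path xs \<longleftrightarrow> ok 0 xs"
  by (simp add: ok_gen dyck_path_def)

lemma ok_even: "ok 0 xs \<Longrightarrow> even (length xs)"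
proof -
  assume "ok 0 xs"
  then have "ups xs = downs xs" by (simp add: ok_gen)
  moreover have "length xs = ups xs + downs xs"
    unfolding ups_def downs_def using sum_length_filter_compl[of "\<lambda>s. s" xs] by simp
  ultimately show ?thesis by simp
qed

lemma ok_lift: "ok k A \<Longrightarrow> ok (k + h) (A @ ys) = ok h ys"
proof (induction A arbitrary: k)
  case Nil then show ?case by simp
next
  case (Cons x A)
  show ?case
  proof (cases x)
    case True then show ?thesis using Cons.IH[of "Suc k"] Cons.prems by simp
  next
    case False then show ?thesis using Cons.IH[of "k - 1"] Cons.prems by (cases k) auto
  qed
qed

definition phi :: "bool list \<Rightarrow> bool list \<Rightarrow> bool list" where
  "phi A B = True # A @ False # B"

lemma ok_phi: "ok 0 A \<Longrightarrow> ok 0 (phi A B) = ok 0 B"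
  using ok_lift[of 0 A 1 "False # B"] by (simp add: phi_def)

lemma ok_split: "ok (Suc h) ys \<Longrightarrow> \<exists>A C. ys = A @ False # C \<and> ok 0 A \<and> ok h C"
proof (induction "length ys" arbitrary: ys h rule: less_induct)
  case less
  show ?case
  proof (cases ys)
    case Nil then show ?thesis using less.prems by simp
  next
    case (Cons x ys')
    show ?thesis
    proof (cases x)
      case False then show ?thesis using less.prems Cons by (intro exI[of _ "[]"] exI[of _ ys']) auto
    next
      case True
      then have "ok (Suc (Suc h)) ys'" using less.prems Cons by simp
      then obtain A1 C1 where 1: "ys' = A1 @ False # C1" "ok 0 A1" "ok (Suc h) C1"
        using less.hyps[of ys' "Suc h"] Cons by auto
      then obtain A2 C2 where 2: "C1 = A2 @ False # C2" "ok 0 A2" "ok h C2"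
        using less.hyps[of C1 h] Cons by auto
      have "ok 0 (phi A1 A2)" using ok_phi 1 2 by simp
      then show ?thesis using 1 2 Cons True
        by (intro exI[of _ "phi A1 A2"] exI[of _ C2]) (simp add: phi_def)
    qed
  qed
qed

lemma ok_decomp: "ok 0 xs \<Longrightarrow> xs \<noteq> [] \<Longrightarrow> \<exists>A B. xs = phi A B \<and> ok 0 A \<and> ok 0 B"
proof -
  assume a: "ok 0 xs" "xs \<noteq> []"
  then obtain x ys where xs: "xs = x # ys" by (cases xs) auto
  with a have "x" by (cases x) auto
  with a xs have "ok (Suc 0) ys" by simp
  then show ?thesis using ok_split[of 0 ys] xs \<open>x\<close> by (auto simp: phi_def)
qed

lemma ok_uniq_aux: "ok 0 A \<Longrightarrow> ok 0 A' \<Longrightarrow> A @ False # B = A' @ False # B' \<Longrightarrow> length A' \<le> length A \<Longrightarrow> A = A'"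
proof -
  assume a: "ok 0 A" "ok 0 A'" "A @ False # B = A' @ False # B'" "length A' \<le> length A"
  then obtain us where us: "A = A' @ us" "us @ False # B = False # B'"
    by (auto simp: append_eq_append_conv2)
  show "A = A'"
  proof (cases us)
    case Nil then show ?thesis using us by simp
  next
    case (Cons u D)
    with us have "u = False" by simp
    with a us Cons ok_lift[of 0 A' 0 "False # D"] show ?thesis by simp
  qed
qed

lemma phi_inj: "ok 0 A \<Longrightarrow> ok 0 A' \<Longrightarrow> phi A B = phi A' B' \<Longrightarrow> A = A' \<and> B = B'"
proof -
  assume a: "ok 0 A" "ok 0 A'" "phi A B = phi A' B'"
  then have e: "A @ False # B = A' @ False # B'" by (simp add: phi_def)
  have "A = A'"
    using ok_uniq_aux[OF a(1,2) e] ok_uniq_aux[OF a(2,1) e[symmetric]] by (metis nat_le_linear)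
  with e show ?thesis by simp
qed



fun da :: "nat \<Rightarrow> bool list \<Rightarrow> nat list \<times> nat" where
  "da k [] = ([], k)"
| "da k (False # xs) = da (Suc k) xs"
| "da k (True # xs) = ((if k > 0 then [k] else []) @ fst (da 0 xs), snd (da 0 xs))"

lemma desc_da: "desc_aux k xs = fst (da k xs) @ (if snd (da k xs) > 0 then [snd (da k xs)] else [])"
  by (induction k xs rule: da.induct) auto

lemma da_append: "da k (xs @ ys) = (fst (da k xs) @ fst (da (snd (da k xs)) ys), snd (da (snd (da k xs)) ys))"
  by (induction k xs rule: da.induct) auto

lemma ok_last: "ok h (ys @ [True]) = False"
  by (induction h ys rule: ok.induct) auto

lemma da_snd_pos: "ok 0 A \<Longrightarrow> A \<noteq> [] \<Longrightarrow> snd (da k A) > 0"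
proof -
  assume a: "ok 0 A" "A \<noteq> []"
  then obtain ys z where A: "A = ys @ [z]" by (metis rev_exhaust)
  with a ok_last have "\<not> z" by auto
  with A show ?thesis by (simp add: da_append)
qed

lemma ok_hd: "ok 0 B \<Longrightarrow> B = [] \<or> hd B"
proof (cases B)
  case (Cons a B') then show "ok 0 B \<Longrightarrow> B = [] \<or> hd B" by (cases a) auto
qed simp

lemma desc_Suc: "B = [] \<or> hd B \<Longrightarrow> desc_aux (Suc m) B = Suc m # descents B"
proof (cases B)
  case (Cons a B') then show "B = [] \<or> hd B \<Longrightarrow> desc_aux (Suc m) B = Suc m # descents B"
    by (cases a) (auto simp: descents_def)
qed (simp add: descents_def)

lemma desc_phi: "descents (phi A B) = fst (da 0 A) @ Suc (snd (da 0 A)) # descents B"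
  if "ok 0 B"
proof -
  have "descents (phi A B) = desc_aux 0 (A @ False # B)" by (simp add: phi_def descents_def)
  also have "\<dots> = fst (da 0 A) @ desc_aux (Suc (snd (da 0 A))) B"
    by (simp add: desc_da da_append)
  also have "\<dots> = fst (da 0 A) @ Suc (snd (da 0 A)) # descents B"
    using desc_Suc ok_hd[OF that] by simp
  finally show ?thesis .
qed

lemma descents_Nil[simp]: "descents [] = []" by (simp add: descents_def)

definition allodd :: "nat list \<Rightarrow> bool" where "allodd ds = (\<forall>d\<in>set ds. odd d)"
definition isEd :: "nat list \<Rightarrow> bool" where
  "isEd ds = (ds \<noteq> [] \<and> (\<forall>d\<in>set (butlast ds). odd d) \<and> even (last ds))"
definition isOd :: "nat list \<Rightarrow> bool" where
  "isOd ds = (ds \<noteq> [] \<and> allodd ds)"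

lemma isOd_split: "isOd (l @ Suc m # dB) \<longleftrightarrow> allodd l \<and> even m \<and> (dB = [] \<or> isOd dB)"
  by (auto simp: isOd_def allodd_def)

lemma isEd_split: "isEd (l @ Suc m # dB) \<longleftrightarrow>
   (dB = [] \<and> allodd l \<and> odd m) \<or> (dB \<noteq> [] \<and> allodd l \<and> even m \<and> isEd dB)"
  by (auto simp: isEd_def allodd_def butlast_append)

lemma desc_A: "descents A = fst (da 0 A) @ (if snd (da 0 A) > 0 then [snd (da 0 A)] else [])"
  by (simp add: descents_def desc_da)

lemma Ee_char: "ok 0 A \<Longrightarrow> (A = [] \<or> isEd (descents A)) \<longleftrightarrow> allodd (fst (da 0 A)) \<and> even (snd (da 0 A))"
  apply (cases "A = []")
   apply (simp add: allodd_def)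
  using da_snd_pos[of A 0] by (auto simp: desc_A isEd_def allodd_def)

lemma O_char: "ok 0 A \<Longrightarrow> isOd (descents A) \<longleftrightarrow> allodd (fst (da 0 A)) \<and> odd (snd (da 0 A))"
  apply (cases "A = []")
   apply (simp add: allodd_def isOd_def descents_def)
  using da_snd_pos[of A 0] by (auto simp: desc_A isOd_def allodd_def)

lemma desc_empty: "ok 0 B \<Longrightarrow> descents B = [] \<longleftrightarrow> B = []"
proof -
  assume a: "ok 0 B"
  show ?thesis
  proof (cases "B = []")
    case False
    with a da_snd_pos[of B 0] have "snd (da 0 B) > 0" by blast
    with False show ?thesis by (simp add: desc_A)
  qed (simp add: descents_def)
qed

lemma isO_phi: "ok 0 A \<Longrightarrow> ok 0 B \<Longrightarrow>
  isOd (descents (phi A B)) \<longleftrightarrow> (A = [] \<or> isEd (descents A)) \<and> (B = [] \<or> isOd (descents B))"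
  by (simp add: desc_phi isOd_split Ee_char desc_empty)

lemma isE_phi: "ok 0 A \<Longrightarrow> ok 0 B \<Longrightarrow>
  isEd (descents (phi A B)) \<longleftrightarrow> (B = [] \<and> isOd (descents A)) \<or> ((A = [] \<or> isEd (descents A)) \<and> isEd (descents B))"
proof (cases "B = []")
  case True
  assume a: "ok 0 A" "ok 0 B"
  with True show ?thesis by (simp add: desc_phi isEd_split O_char isEd_def[of "[]"])
next
  case False
  assume a: "ok 0 A" "ok 0 B"
  with False desc_empty[of B] have "descents B \<noteq> []" by simp
  with False a show ?thesis by (simp add: desc_phi isEd_split Ee_char)
qed



definition S :: "(bool list \<Rightarrow> bool) \<Rightarrow> nat \<Rightarrow> bool list set" where
  "S Q n = {xs. length xs = n \<and> ok 0 xs \<and> Q xs}"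
definition cnt :: "(bool list \<Rightarrow> bool) \<Rightarrow> nat \<Rightarrow> nat" where
  "cnt Q n = card (S Q n)"
definition T :: "(bool list \<Rightarrow> bool) \<Rightarrow> (bool list \<Rightarrow> bool) \<Rightarrow> nat \<Rightarrow> bool list set" where
  "T QA QB n = {xs. length xs = Suc (Suc n) \<and> ok 0 xs \<and> (\<exists>A B. xs = phi A B \<and> ok 0 A \<and> ok 0 B \<and> QA A \<and> QB B)}"

lemma finite_S: "finite (S Q n)"
proof -
  have "S Q n \<subseteq> {xs. set xs \<subseteq> UNIV \<and> length xs = n}" by (auto simp: S_def)
  then show ?thesis using finite_lists_length_eq[of "UNIV :: bool set" n] finite_subset by auto
qed

lemma finite_T: "finite (T QA QB n)"
proof -
  have "T QA QB n \<subseteq> {xs. set xs \<subseteq> UNIV \<and> length xs = Suc (Suc n)}" by (auto simp: T_def)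
  then show ?thesis using finite_lists_length_eq[of "UNIV :: bool set"] finite_subset by auto
qed

lemma length_phi[simp]: "length (phi A B) = Suc (Suc (length A + length B))"
  by (simp add: phi_def)

lemma T_card: "card (T QA QB n) = (\<Sum>i\<le>n. cnt QA i * cnt QB (n - i))"
proof -
  define Pr where "Pr = (\<Union>i\<in>{..n}. S QA i \<times> S QB (n - i))"
  have eq: "T QA QB n = (\<lambda>(A,B). phi A B) ` Pr"
  proof
    show "T QA QB n \<subseteq> (\<lambda>(A,B). phi A B) ` Pr"
    proof
      fix xs assume "xs \<in> T QA QB n"
      then obtain A B where h: "length xs = Suc (Suc n)" "xs = phi A B" "ok 0 A" "ok 0 B" "QA A" "QB B"
        by (auto simp: T_def)
      then have "(A, B) \<in> Pr" unfolding Pr_def S_def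
        by (intro UN_I[of "length A"]) auto
      with h show "xs \<in> (\<lambda>(A,B). phi A B) ` Pr" by force
    qed
  next
    show "(\<lambda>(A,B). phi A B) ` Pr \<subseteq> T QA QB n"
      by (auto simp: Pr_def S_def T_def ok_phi)
  qed
  have inj: "inj_on (\<lambda>(A,B). phi A B) Pr"
    by (auto simp: inj_on_def Pr_def S_def dest: phi_inj)
  have "card Pr = (\<Sum>i\<le>n. card (S QA i \<times> S QB (n - i)))"
    unfolding Pr_def
    apply (rule card_UN_disjoint)
      apply simp
     apply (simp add: finite_S)
    apply (auto simp: S_def)
    done
  also have "\<dots> = (\<Sum>i\<le>n. cnt QA i * cnt QB (n - i))"
    by (simp add: card_cartesian_product cnt_def)
  finally show ?thesis using eq inj card_image by metis
qed

definition isE :: "bool list \<Rightarrow> bool" where "isE xs = isEd (descents xs)"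
definition isO :: "bool list \<Rightarrow> bool" where "isO xs = isOd (descents xs)"

lemma isE_Nil: "\<not> isE []" by (simp add: isE_def isEd_def)
lemma isO_Nil: "\<not> isO []" by (simp add: isO_def isOd_def)

lemma S_decomp: "S Q (Suc (Suc n)) = {xs. length xs = Suc (Suc n) \<and> ok 0 xs \<and>
     (\<exists>A B. xs = phi A B \<and> ok 0 A \<and> ok 0 B \<and> Q (phi A B))}"
proof (rule set_eqI, rule iffI)
  fix xs assume "xs \<in> S Q (Suc (Suc n))"
  then have h: "length xs = Suc (Suc n)" "ok 0 xs" "Q xs" by (auto simp: S_def)
  then have "xs \<noteq> []" by auto
  then obtain A B where "xs = phi A B" "ok 0 A" "ok 0 B" using ok_decomp h by blast
  with h show "xs \<in> {xs. length xs = Suc (Suc n) \<and> ok 0 xs \<and>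
     (\<exists>A B. xs = phi A B \<and> ok 0 A \<and> ok 0 B \<and> Q (phi A B))}" by blast
qed (auto simp: S_def)

lemma SE: "S isE (Suc (Suc n)) = T isO (\<lambda>B. B = []) n \<union> T (\<lambda>A. A = [] \<or> isE A) isE n"
proof -
  have "\<And>A B. ok 0 A \<Longrightarrow> ok 0 B \<Longrightarrow> isE (phi A B) \<longleftrightarrow> (isO A \<and> B = []) \<or> ((A = [] \<or> isE A) \<and> isE B)"
    unfolding isE_def isO_def using isE_phi by blast
  then show ?thesis unfolding S_decomp T_def by blast
qed

lemma SE_disj: "T isO (\<lambda>B. B = []) n \<inter> T (\<lambda>A. A = [] \<or> isE A) isE n = {}"
proof -
  have "False" if a1: "xs \<in> T isO (\<lambda>B. B = []) n" and a2: "xs \<in> T (\<lambda>A. A = [] \<or> isE A) isE n" for xs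
  proof -
    obtain A B where 1: "xs = phi A B" "ok 0 A" "B = []" using a1 unfolding T_def by blast
    obtain A' B' where 2: "xs = phi A' B'" "ok 0 A'" "isE B'" using a2 unfolding T_def by blast
    from 1 2 phi_inj[of A A' B B'] have "B' = []" by simp
    with 2 isE_Nil show False by simp
  qed
  then show ?thesis by blast
qed

lemma SO: "S isO (Suc (Suc n)) = T (\<lambda>A. A = [] \<or> isE A) (\<lambda>B. B = [] \<or> isO B) n"
proof -
  have "\<And>A B. ok 0 A \<Longrightarrow> ok 0 B \<Longrightarrow> isO (phi A B) \<longleftrightarrow> (A = [] \<or> isE A) \<and> (B = [] \<or> isO B)"
    unfolding isE_def isO_def using isO_phi by blast
  then show ?thesis unfolding S_decomp T_def by blast
qed

lemma cnt_Nil: "cnt (\<lambda>B. B = []) i = (if i = 0 then 1 else 0)"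
proof -
  have "S (\<lambda>B. B = []) i = (if i = 0 then {[]} else {})" by (auto simp: S_def)
  then show ?thesis by (simp add: cnt_def)
qed

lemma cnt_orNil: "\<not> Q [] \<Longrightarrow> cnt (\<lambda>B. B = [] \<or> Q B) i = (if i = 0 then 1 else 0) + cnt Q i"
proof -
  assume q: "\<not> Q []"
  show ?thesis
  proof (cases "i = 0")
    case True
    then have "S (\<lambda>B. B = [] \<or> Q B) i = {[]}" "S Q i = {}" using q by (auto simp: S_def)
    then show ?thesis using True by (simp add: cnt_def)
  next
    case False
    then have "S (\<lambda>B. B = [] \<or> Q B) i = S Q i" by (auto simp: S_def)
    then show ?thesis using False by (simp add: cnt_def)
  qed
qed

lemma cnt_odd: "odd n \<Longrightarrow> cnt Q n = 0"
proof -
  assume "odd n"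
  then have "S Q n = {}" using ok_even by (auto simp: S_def)
  then show ?thesis by (simp add: cnt_def)
qed

lemma cnt_0: "\<not> Q [] \<Longrightarrow> cnt Q 0 = 0"
proof -
  assume "\<not> Q []"
  then have "S Q 0 = {}" by (auto simp: S_def)
  then show ?thesis by (simp add: cnt_def)
qed

definition dl :: "nat \<Rightarrow> nat" where "dl i = (if i = 0 then 1 else 0)"

lemma recE: "cnt isE (Suc (Suc n)) = (\<Sum>i\<le>n. cnt isO i * dl (n - i)) + (\<Sum>i\<le>n. (dl i + cnt isE i) * cnt isE (n - i))"
proof -
  have "cnt isE (Suc (Suc n)) = card (T isO (\<lambda>B. B = []) n) + card (T (\<lambda>A. A = [] \<or> isE A) isE n)"
    unfolding cnt_def SE by (rule card_Un_disjoint[OF finite_T finite_T SE_disj])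
  then show ?thesis by (simp add: T_card cnt_Nil cnt_orNil isE_Nil dl_def)
qed

lemma recO: "cnt isO (Suc (Suc n)) = (\<Sum>i\<le>n. (dl i + cnt isE i) * (dl (n - i) + cnt isO (n - i)))"
  unfolding cnt_def SO by (simp add: T_card[unfolded cnt_def] cnt_orNil[unfolded cnt_def] isE_Nil isO_Nil dl_def)



definition Ef :: "real fps" where "Ef = Abs_fps (\<lambda>n. real (cnt isE n))"
definition Of :: "real fps" where "Of = Abs_fps (\<lambda>n. real (cnt isO n))"

lemma sum_dl: "(\<Sum>i\<le>n. f i * dl (n - i)) = (f n :: nat)"
proof -
  have "(\<Sum>i\<le>n. f i * dl (n - i)) = (\<Sum>i\<le>n. if i = n then f n else 0)"
    by (rule sum.cong) (auto simp: dl_def)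
  then show ?thesis by simp
qed

lemma cE_small: "n < 2 \<Longrightarrow> cnt isE n = 0" "n < 2 \<Longrightarrow> cnt isO n = 0"
  using cnt_0[of isE] isE_Nil cnt_0[of isO] isO_Nil cnt_odd[of 1]
  by (auto simp: less_2_cases_iff)

lemma real_dl: "real (dl i) = (if i = 0 then 1 else 0)" by (simp add: dl_def)

lemma eqE: "Ef = fps_X^2 * (Of + (1 + Ef) * Ef)"
proof (rule fps_ext)
  fix n
  show "Ef $ n = (fps_X^2 * (Of + (1 + Ef) * Ef)) $ n"
  proof (cases "n < 2")
    case True then show ?thesis by (simp add: fps_X_power_mult_nth Ef_def cE_small)
  next
    case False
    define m where "m = n - 2"
    with False have n: "n = Suc (Suc m)" by simp
    have "real (cnt isE n) = real (cnt isO m) + (\<Sum>i\<le>m. real (dl i + cnt isE i) * real (cnt isE (m - i)))"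
      unfolding n recE sum_dl by simp
    also have "\<dots> = (Of + (1 + Ef) * Ef) $ m"
      by (simp add: fps_mult_nth Of_def Ef_def atLeast0AtMost real_dl)
    finally show ?thesis using n by (simp add: fps_X_power_mult_nth Ef_def)
  qed
qed

lemma eqO: "Of = fps_X^2 * ((1 + Ef) * (1 + Of))"
proof (rule fps_ext)
  fix n
  show "Of $ n = (fps_X^2 * ((1 + Ef) * (1 + Of))) $ n"
  proof (cases "n < 2")
    case True then show ?thesis by (simp add: fps_X_power_mult_nth Of_def cE_small)
  next
    case False
    define m where "m = n - 2"
    with False have n: "n = Suc (Suc m)" by simp
    have "real (cnt isO n) = (\<Sum>i\<le>m. real (dl i + cnt isE i) * real (dl (m - i) + cnt isO (m - i)))"
      unfolding n recO by simp
    also have "\<dots> = ((1 + Ef) * (1 + Of)) $ m"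
      by (simp add: fps_mult_nth Of_def Ef_def atLeast0AtMost real_dl)
    finally show ?thesis using n by (simp add: fps_X_power_mult_nth Of_def)
  qed
qed


definition cub :: "real fls \<Rightarrow> real fls" where
  "cub w = w^3 + (fls_X^2 - 1) * w^2 - fls_X^4 * w + fls_X^4"

lemma fls_eqs:
  defines "e \<equiv> fps_to_fls Ef" and "p \<equiv> fps_to_fls Of" and "x \<equiv> (fls_X :: real fls)"
  shows "e = x^2 * (p + (1 + e) * e)" "p = x^2 * ((1 + e) * (1 + p))"
proof -
  have "fps_to_fls Ef = fps_to_fls (fps_X^2 * (Of + (1 + Ef) * Ef))" using eqE by simp
  then show "e = x^2 * (p + (1 + e) * e)"
    by (simp add: e_def p_def x_def fls_times_fps_to_fls fps_to_fls_power)
  have "fps_to_fls Of = fps_to_fls (fps_X^2 * ((1 + Ef) * (1 + Of)))" using eqO by simp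
  then show "p = x^2 * ((1 + e) * (1 + p))"
    by (simp add: e_def p_def x_def fls_times_fps_to_fls fps_to_fls_power)
qed

definition Wf :: "real fps" where "Wf = 1 - fps_X^2 - fps_X^2 * Ef"

lemma key:
  defines "e \<equiv> fps_to_fls Ef" and "w \<equiv> fps_to_fls Wf" and "x \<equiv> (fls_X :: real fls)"
  shows "e * w^2 = x^4 * (1 + e)" "cub w = 0" "w = 1 - x^2 - x^2 * e"
proof -
  define p where "p = fps_to_fls Of"
  have E: "e = x^2 * (p + (1 + e) * e)" and O: "p = x^2 * ((1 + e) * (1 + p))"
    using fls_eqs unfolding e_def p_def x_def by auto
  show wdef: "w = 1 - x^2 - x^2 * e"
    by (simp add: w_def Wf_def e_def x_def fls_times_fps_to_fls fps_to_fls_power)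
  have Y1: "x^2 * p = e - x^2 * (1 + e) * e" using E by algebra
  have Y2: "x^2 * p = x^2 * (1 + e) * (x^2 + x^2 * p)"
    using O by algebra
  have id1: "e * w^2 - x^4 * (1 + e) = (e - x^2 * (1 + e) * e) - x^2 * (1 + e) * (x^2 + (e - x^2 * (1 + e) * e))"
    unfolding wdef by algebra
  also have "\<dots> = 0" using Y1 Y2 by simp
  finally show R: "e * w^2 = x^4 * (1 + e)" by simp
  have "cub w = (- (x^2)) * (e * w^2 - x^4 * (1 + e))"
    unfolding cub_def wdef x_def by algebra
  then show "cub w = 0" using R by simp
qed


lemma uniq:
  fixes w1 w2 :: "real fls"
  assumes s1: "fls_subdegree w1 \<ge> 0" and s2: "fls_subdegree w2 \<ge> 0"
    and c1: "fls_nth w1 0 = 1" and c2: "fls_nth w2 0 = 1" and q1: "cub w1 = 0" and q2: "cub w2 = 0"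
  shows "w1 = w2"
proof -
  define V1 where "V1 = fls_regpart w1"
  define V2 where "V2 = fls_regpart w2"
  have w1: "w1 = fps_to_fls V1" using s1 by (simp add: V1_def)
  have w2: "w2 = fps_to_fls V2" using s2 by (simp add: V2_def)
  have v1: "V1 $ 0 = 1" using c1 by (simp add: V1_def)
  have v2: "V2 $ 0 = 1" using c2 by (simp add: V2_def)
  define Q where "Q = V1^2 + V1 * V2 + V2^2 + (fps_X^2 - 1) * (V1 + V2) - fps_X^4"
  have "Q $ 0 = 1" using v1 v2 by (simp add: Q_def fps_power_zeroth)
  then have "Q \<noteq> 0" by auto
  then have Qn: "fps_to_fls Q \<noteq> 0" by simp
  have "fps_to_fls Q = w1^2 + w1 * w2 + w2^2 + (fls_X^2 - 1) * (w1 + w2) - fls_X^4"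
    by (simp add: Q_def w1 w2 fls_times_fps_to_fls fps_to_fls_power)
  moreover have "(w1 - w2) * (w1^2 + w1 * w2 + w2^2 + (fls_X^2 - 1) * (w1 + w2) - fls_X^4) = cub w1 - cub w2"
    unfolding cub_def by algebra
  ultimately have "(w1 - w2) * fps_to_fls Q = cub w1 - cub w2" by simp
  then have "(w1 - w2) * fps_to_fls Q = 0" using q1 q2 by simp
  with Qn show ?thesis by simp
qed

definition u0 :: "real fls" where "u0 = fps_to_fls Wf / fls_X"

lemma cub_u: "fls_X^2 * (fls_X * u ^ 3 + (fls_X ^ 2 - 1) * u ^ 2 - fls_X ^ 3 * u + fls_X ^ 2) = cub (fls_X * u)"
  unfolding cub_def by algebra

lemma Wf0: "Wf $ 0 = 1" by (simp add: Wf_def)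

lemma v1_eq: "v1 = u0"
  unfolding v1_def
proof (rule the_equality)
  have xu: "fls_X * u0 = fps_to_fls Wf"
    unfolding u0_def times_divide_eq_right by (rule nonzero_mult_div_cancel_left[OF fls_X_nonzero])
  have "fls_X^2 * (fls_X * u0 ^ 3 + (fls_X ^ 2 - 1) * u0 ^ 2 - fls_X ^ 3 * u0 + fls_X ^ 2) = 0"
    using cub_u[of u0] key(2) xu by simp
  then have "fls_X * u0 ^ 3 + (fls_X ^ 2 - 1) * u0 ^ 2 - fls_X ^ 3 * u0 + fls_X ^ 2 = 0" by simp
  then show "fls_X * u0 ^ 3 + (fls_X ^ 2 - 1) * u0 ^ 2 - fls_X ^ 3 * u0 + fls_X ^ 2 = 0 \<and>
    0 \<le> fls_subdegree (fls_X * u0) \<and> fls_nth (fls_X * u0) 0 = 1"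
    using xu fls_subdegree_fls_to_fps_gt0[of Wf] Wf0 by simp
next
  fix u :: "real fls" assume a: "fls_X * u ^ 3 + (fls_X ^ 2 - 1) * u ^ 2 - fls_X ^ 3 * u + fls_X ^ 2 = 0 \<and>
    0 \<le> fls_subdegree (fls_X * u) \<and> fls_nth (fls_X * u) 0 = 1"
  have "cub (fls_X * u) = 0" using cub_u[of u] a by simp
  then have "fls_X * u = fps_to_fls Wf"
    using uniq[of "fls_X * u" "fps_to_fls Wf"] a key(2) fls_subdegree_fls_to_fps_gt0[of Wf] Wf0 by simp
  then show "u = u0" unfolding u0_def
    using nonzero_mult_div_cancel_left[OF fls_X_nonzero, of u] by metis
qed

lemma b_cnt: "b n = cnt isE (2 * n)"
  unfolding b_def cnt_def S_def isE_def isEd_def dyck_ok by simp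

lemma h0_eq: "h0 = fps_to_fls Ef"
proof -
  have "Abs_fps (\<lambda>k. if even k \<and> k \<ge> 2 then real (b (k div 2)) else 0) = Ef"
  proof (rule fps_ext)
    fix k
    show "Abs_fps (\<lambda>k. if even k \<and> k \<ge> 2 then real (b (k div 2)) else 0) $ k = Ef $ k"
    proof (cases "even k")
      case True then show ?thesis using cE_small(1)[of k] by (auto simp: Ef_def b_cnt)
    next
      case False then show ?thesis by (simp add: Ef_def cnt_odd)
    qed
  qed
  then show ?thesis by (simp add: h0_def)
qed



lemma E0: "cnt isE 0 = 0" using cnt_0[of isE] isE_Nil by blast
lemma O0: "cnt isO 0 = 0" using cnt_0[of isO] isO_Nil by blast
lemma odds: "cnt isE (Suc 0) = 0" "cnt isO (Suc 0) = 0" "cnt isE 3 = 0" "cnt isO 3 = 0" "cnt isE 5 = 0" "cnt isO 5 = 0"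
  "cnt isE 7 = 0" "cnt isO 7 = 0" "cnt isE 9 = 0" "cnt isO 9 = 0" "cnt isE 11 = 0" "cnt isO 11 = 0"
  by (simp_all add: cnt_odd)

lemma recE2: "cnt isE (n + 2) = (\<Sum>i\<le>n. cnt isO i * dl (n - i)) + (\<Sum>i\<le>n. (dl i + cnt isE i) * cnt isE (n - i))"
  using recE[of n] by simp
lemma recO2: "cnt isO (n + 2) = (\<Sum>i\<le>n. (dl i + cnt isE i) * (dl (n - i) + cnt isO (n - i)))"
  using recO[of n] by simp

lemmas base = E0 O0 odds dl_def atMost_nat_numeral

lemma v2: "cnt isE 2 = 0" "cnt isO 2 = 1"
  using recE2[of 0] recO2[of 0] by (simp_all add: base numeral_2_eq_2)
lemma v4: "cnt isE 4 = 1" "cnt isO 4 = 1"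
  using recE2[of 2] recO2[of 2] by (simp_all add: base v2)
lemma v6: "cnt isE 6 = 2" "cnt isO 6 = 2"
  using recE2[of 4] recO2[of 4] by (simp_all add: base v2 v4)
lemma v8: "cnt isE 8 = 4" "cnt isO 8 = 5"
  using recE2[of 6] recO2[of 6] by (simp_all add: base v2 v4 v6)
lemma v10: "cnt isE 10 = 10" "cnt isO 10 = 12"
  using recE2[of 8] recO2[of 8] by (simp_all add: base v2 v4 v6 v8)
lemma v12: "cnt isE 12 = 26" "cnt isO 12 = 30"
  using recE2[of 10] recO2[of 10] by (simp_all add: base v2 v4 v6 v8 v10)
lemma v14: "cnt isE 14 = 68" "cnt isO 14 = 79"
  using recE2[of 12] recO2[of 12] by (simp_all add: base v2 v4 v6 v8 v10 v12)


theorem mainTheorem2: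
  shows "h0 = fls_X ^ 2 / (v1 ^ 2 - fls_X ^ 2)
       \<and> h0 = 1 / fls_X ^ 2 - v1 / fls_X - 1
       \<and> map b [1..<8] = [0, 1, 2, 4, 10, 26, 68]"
proof (intro conjI)
  define e where "e = fps_to_fls Ef"
  define w where "w = fps_to_fls Wf"
  define x where "x = (fls_X :: real fls)"
  have R: "e * w^2 = x^4 * (1 + e)" and wd: "w = 1 - x^2 - x^2 * e"
    using key unfolding e_def w_def x_def by auto
  have x0: "x \<noteq> 0" by (simp add: x_def)
  have "(Wf^2 - fps_X^4) $ 0 = 1" by (simp add: Wf0 fps_power_zeroth)
  then have "Wf^2 - fps_X^4 \<noteq> 0" by auto
  then have "fps_to_fls (Wf^2 - fps_X^4) \<noteq> 0" by simp
  then have n0: "w^2 - x^4 \<noteq> 0" by (simp add: w_def x_def fps_to_fls_power)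
  have v: "v1 = w / x" by (simp add: v1_eq u0_def w_def x_def)
  have h: "h0 = e" by (simp add: h0_eq e_def)
  have d: "(w / x)^2 - x^2 = (w^2 - x^4) / x^2"
    using x0 by (simp add: power_divide field_simps)
  have ew: "e * (w^2 - x^4) = x^4" using R by (simp add: algebra_simps)
  have "x^2 / ((w / x)^2 - x^2) = x^4 / (w^2 - x^4)"
    unfolding d using x0 n0 by (simp add: field_simps)
  also have "\<dots> = e" using ew n0 by (simp add: field_simps)
  finally show "h0 = fls_X ^ 2 / (v1 ^ 2 - fls_X ^ 2)" using h v x_def by simp
  have "1 / x^2 - (w / x) / x - 1 = (1 - w - x^2) / x^2"
    using x0 by (simp add: field_simps power2_eq_square)
  also have "\<dots> = e" unfolding wd using x0 by (simp add: field_simps)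
  finally have c2: "1 / x^2 - (w / x) / x - 1 = e" .
  show "h0 = 1 / fls_X ^ 2 - v1 / fls_X - 1" unfolding h v x_def[symmetric] using c2 by (rule sym)
  show "map b [1..<8] = [0, 1, 2, 4, 10, 26, 68]"
    by (simp add: upt_rec b_cnt v2 v4 v6 v8 v10 v12 v14)
qed

end
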